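(* Let $\vec p=(1,1)$, and let $\vec a,\vec b,\vec c\in\mathbb{R}^2$, $\vec\alpha\in(-1,\infty)^2$. Then the following are equivalent: (1) $S_{\vec a,\vec b,\vec c}$ is bounded from $L^{\vec p}_{\vec\alpha}(T_B\times T_B)$ to $L^\infty(T_B\times T_B)$; (2) $T_{\vec a,\vec b,\vec c}$ is bounded from $L^{\vec p}_{\vec\alpha}(T_B\times T_B)$ to $L^\infty(T_B\times T_B)$; (3) for each $i\in\{1,2\}$: $a_i\ge 0$, $b_i\ge\alpha_i$, and $c_i=a_i+b_i-\alpha_i$.
   Context: Let $n$ be a positive integer. For $z=(z_1,\dots,z_n)\in\mathbb{C}^n$ write $z=x+iy$ with $x,y\in\mathbb{R}^n$, $z'=(z_1,\dots,z_{n-1})$, $y'=(y_1,\dots,y_{n-1})$. Let $B=\{y\in\mathbb{R}^n: |y'|^2<y_n\}$ and $T_B=\{x+iy: x\in\mathbb{R}^n, y\in B\}$. For $z\in T_B$ put $\rho(z)=y_n-|y'|^2>0$, and for $z,u\in T_B$ put $\rho(z,u)=\frac14\big(\sum_{j=1}^{n-1}(z_j-\overline{u_j})^2-2i(z_n-\overline{u_n})\big)$; this has positive real part, and complex powers $\rho(z,u)^c$ are taken with the principal branch. $dV$ is Lebesgue measure on $\mathbb{C}^n$ and $dV_\alpha(z)=\rho(z)^\alpha dV(z)$. For $\vec p=(p_1,p_2)\in[1,\infty]^2$ and $\vec\alpha=(\alpha_1,\alpha_2)$, $L^{\vec p}_{\vec\alpha}(T_B\times T_B)$ is the space of measurable $f$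 on $T_B\times T_B$ with finite mixed norm $\|f\|_{\vec p,\vec\alpha}=\big\{\int_{T_B}\big(\int_{T_B}|f(z,w)|^{p_1}dV_{\alpha_1}(z)\big)^{p_2/p_1}dV_{\alpha_2}(w)\big\}^{1/p_2}$, with the inner (resp. outer) integral replaced by an essential supremum in $z$ (resp. $w$) when $p_1=\infty$ (resp. $p_2=\infty$); when $\vec p=(\infty,\infty)$ this is $L^\infty(T_B\times T_B)$. For $\vec a=(a_1,a_2),\vec b=(b_1,b_2),\vec c=(c_1,c_2)\in\mathbb{R}^2$, $T_{\vec a,\vec b,\vec c}f(z,w)=\rho(z)^{a_1}\rho(w)^{a_2}\int_{T_B}\int_{T_B}\frac{\rho(u)^{b_1}\rho(\eta)^{b_2}}{\rho(z,u)^{c_1}\rho(w,\eta)^{c_2}}f(u,\eta)\,dV(u)\,dV(\eta)$ and $S_{\vec a,\vec b,\vec c}f(z,w)=\rho(z)^{a_1}\rho(w)^{a_2}\int_{T_B}\int_{T_B}\frac{\rho(u)^{b_1}\rho(\eta)^{b_2}}{|\rho(z,u)|^{c_1}|\rho(w,\eta)|^{c_2}}f(u,\eta)\,dV(u)\,dV(\eta)$. An operator is bounded from $X$ to $Y$ if for every $f\in X$ the defining integral converges for a.e. $(z,w)$ and $\|Tf\|_Y\le C\|f\|_X$ with $C$ independent of $f$. *)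

theory Defs
  imports "HOL-Analysis.Analysis"
begin

text \<open>Points of C^n are modelled as functions nat => complex on the index set {..<n};
  coordinate z_j of the paper (1 <= j <= n) is z (j-1).\<close>

definition CV :: "nat \<Rightarrow> (nat \<Rightarrow> complex) measure" where
  "CV n = PiM {..<n} (\<lambda>_. lborel)"

definition rho :: "nat \<Rightarrow> (nat \<Rightarrow> complex) \<Rightarrow> real" where
  "rho n z = Im (z (n - 1)) - (\<Sum>j<n - 1. (Im (z j))\<^sup>2)"

definition TB :: "nat \<Rightarrow> (nat \<Rightarrow> complex) set" where
  "TB n = {z \<in> space (CV n). 0 < rho n z}"

definition rho2 :: "nat \<Rightarrow> (nat \<Rightarrow> complex) \<Rightarrow> (nat \<Rightarrow> complex) \<Rightarrow> complex" where
  "rho2 n z u = ((\<Sum>j<n - 1. (z j - cnj (u j))\<^sup>2) - 2 * \<i> * (z (n - 1) - cnj (u (n - 1)))) / 4"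

text \<open>Kernels of T and S; complex powers use the principal branch (complex powr).
  Vectors in R^2 are pairs: a = (a_1, a_2).\<close>
definition kernT :: "nat \<Rightarrow> real \<times> real \<Rightarrow> real \<times> real \<Rightarrow>
    (nat \<Rightarrow> complex) \<Rightarrow> (nat \<Rightarrow> complex) \<Rightarrow> (nat \<Rightarrow> complex) \<Rightarrow> (nat \<Rightarrow> complex) \<Rightarrow> complex" where
  "kernT n b c z w u \<eta> =
     of_real (rho n u powr fst b * rho n \<eta> powr snd b) /
     (rho2 n z u powr of_real (fst c) * rho2 n w \<eta> powr of_real (snd c))"

definition kernS :: "nat \<Rightarrow> real \<times> real \<Rightarrow> real \<times> real \<Rightarrow>
    (nat \<Rightarrow> complex) \<Rightarrow> (nat \<Rightarrow> complex) \<Rightarrow> (nat \<Rightarrow> complex) \<Rightarrow> (nat \<Rightarrow> complex) \<Rightarrow> complex" where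
  "kernS n b c z w u \<eta> =
     of_real (rho n u powr fst b * rho n \<eta> powr snd b /
       (cmod (rho2 n z u) powr fst c * cmod (rho2 n w \<eta>) powr snd c))"

definition int_op :: "nat \<Rightarrow> real \<times> real \<Rightarrow>
    ((nat \<Rightarrow> complex) \<Rightarrow> (nat \<Rightarrow> complex) \<Rightarrow> (nat \<Rightarrow> complex) \<Rightarrow> (nat \<Rightarrow> complex) \<Rightarrow> complex) \<Rightarrow>
    ((nat \<Rightarrow> complex) \<times> (nat \<Rightarrow> complex) \<Rightarrow> complex) \<Rightarrow>
    (nat \<Rightarrow> complex) \<times> (nat \<Rightarrow> complex) \<Rightarrow> complex" where
  "int_op n a K f = (\<lambda>(z, w). of_real (rho n z powr fst a * rho n w powr snd a) *
      set_lebesgue_integral (CV n \<Otimes>\<^sub>M CV n) (TB n \<times> TB n) (\<lambda>(u, \<eta>). K z w u \<eta> * f (u, \<eta>)))"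

definition mixnorm11 :: "nat \<Rightarrow> real \<times> real \<Rightarrow> ((nat \<Rightarrow> complex) \<times> (nat \<Rightarrow> complex) \<Rightarrow> complex) \<Rightarrow> ennreal" where
  "mixnorm11 n \<alpha> f =
     (\<integral>\<^sup>+ w. (\<integral>\<^sup>+ z. ennreal (indicator (TB n) z * cmod (f (z, w)) * rho n z powr fst \<alpha>) \<partial>CV n)
        * ennreal (indicator (TB n) w * rho n w powr snd \<alpha>) \<partial>CV n)"

text \<open>Boundedness from L^{(1,1)}_alpha to L^infty(T_B x T_B): for every f of finite norm the
  defining integral converges absolutely for a.e. (z,w) in T_B x T_B, and
  ||Kf||_infty <= C ||f||, the essential-sup bound being written as an a.e. bound.\<close>
definition bounded_11_inf :: "nat \<Rightarrow> real \<times> real \<Rightarrow> real \<times> real \<Rightarrow>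
    ((nat \<Rightarrow> complex) \<Rightarrow> (nat \<Rightarrow> complex) \<Rightarrow> (nat \<Rightarrow> complex) \<Rightarrow> (nat \<Rightarrow> complex) \<Rightarrow> complex) \<Rightarrow> bool" where
  "bounded_11_inf n \<alpha> a K \<longleftrightarrow>
     (\<exists>C::real. \<forall>f \<in> borel_measurable (CV n \<Otimes>\<^sub>M CV n). mixnorm11 n \<alpha> f < \<infinity> \<longrightarrow>
        (AE p in CV n \<Otimes>\<^sub>M CV n. p \<in> TB n \<times> TB n \<longrightarrow>
           set_integrable (CV n \<Otimes>\<^sub>M CV n) (TB n \<times> TB n)
             (\<lambda>(u, \<eta>). K (fst p) (snd p) u \<eta> * f (u, \<eta>))) \<and>
        (AE p in CV n \<Otimes>\<^sub>M CV n. p \<in> TB n \<times> TB n \<longrightarrow>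
           cmod (int_op n a K f p) \<le> C * enn2real (mixnorm11 n \<alpha> f)))"

end

theory Submission imports Defs "HOL-Complex_Analysis.Complex_Analysis" begin

lemma eventually_nhds_fun_box:
  fixes x0 :: "nat \<Rightarrow> complex"
  assumes "eventually Q (nhds x0)"
  shows "\<exists>\<delta>>0. \<forall>y. (\<forall>j<n. dist (y j) (x0 j) < \<delta>) \<and> (\<forall>j\<ge>n. y j = x0 j) \<longrightarrow> Q y"
proof -
  obtain S where S: "open S" "x0 \<in> S" "\<forall>y\<in>S. Q y" using assms unfolding eventually_nhds by blast
  have "openin (product_topology (\<lambda>i. euclidean) UNIV) S" using S(1) unfolding open_fun_def .
  from product_topology_open_contains_basis[OF this S(2)] obtain X where
    X: "x0 \<in> (\<Pi>\<^sub>E i\<in>UNIV. X i)" "\<forall>i. open (X i)" "(\<Pi>\<^sub>E i\<in>UNIV. X i) \<subseteq> S" by auto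
  have "\<exists>e>0. ball (x0 i) e \<subseteq> X i" for i
  proof -
    have "x0 i \<in> X i" using X(1) by (auto simp: PiE_iff)
    then show ?thesis using X(2) open_contains_ball by blast
  qed
  then obtain e where e: "\<And>i. e i > 0" "\<And>i. ball (x0 i) (e i) \<subseteq> X i" by metis
  define \<delta> where "\<delta> = Min (insert 1 (e ` {..<n}))"
  have dpos: "\<delta> > 0" unfolding \<delta>_def using e(1) by auto
  have dle: "\<delta> \<le> e j" if "j < n" for j unfolding \<delta>_def using that by auto
  show ?thesis
  proof (intro exI[of _ \<delta>] conjI dpos allI impI)
    fix y assume y: "(\<forall>j<n. dist (y j) (x0 j) < \<delta>) \<and> (\<forall>j\<ge>n. y j = x0 j)"
    have "y \<in> (\<Pi>\<^sub>E i\<in>UNIV. X i)"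
    proof (simp add: PiE_iff, intro allI)
      fix i show "y i \<in> X i"
      proof (cases "i < n")
        case True
        then have "y i \<in> ball (x0 i) (e i)" using y dle[OF True] by (auto simp: dist_commute)
        then show ?thesis using e(2) by blast
      next
        case False then show ?thesis using y X(1) by (auto simp: PiE_iff)
      qed
    qed
    then show "Q y" using X(3) S(3) by blast
  qed
qed

lemma sf_CV: "sigma_finite_measure (CV n)"
  unfolding CV_def
  by (rule product_sigma_finite.sigma_finite) (auto simp: product_sigma_finite_def intro: lborel.sigma_finite_measure_axioms)

lemma psf_CV: "pair_sigma_finite (CV n) (CV n)"
  using sf_CV by (simp add: pair_sigma_finite_def)

lemma space_CV: "space (CV n) = PiE {..<n} (\<lambda>_. UNIV)"
  unfolding CV_def by (simp add: space_PiM)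

lemma coord_meas: "j < n \<Longrightarrow> (\<lambda>z. z j) \<in> borel_measurable (CV n)"
  unfolding CV_def using measurable_component_singleton[of j "{..<n}" "\<lambda>_. lborel"] by simp

lemma coordI_meas: "j < n \<Longrightarrow> f \<in> measurable M (CV n) \<Longrightarrow> (\<lambda>z. f z j) \<in> borel_measurable M"
  using measurable_compose[OF _ coord_meas] by blast

lemma rho_meas: "0 < n \<Longrightarrow> f \<in> measurable M (CV n) \<Longrightarrow> (\<lambda>x. rho n (f x)) \<in> borel_measurable M"
  unfolding rho_def
  by (intro borel_measurable_diff borel_measurable_sum borel_measurable_power borel_measurable_Im[THEN measurable_compose[rotated]] coordI_meas) auto

lemma cnj_meas: "cnj \<in> borel_measurable borel"
  by (rule borel_measurable_continuous_onI) (intro continuous_intros)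

lemma rho2_meas: "0 < n \<Longrightarrow> f \<in> measurable M (CV n) \<Longrightarrow> g \<in> measurable M (CV n) \<Longrightarrow> (\<lambda>x. rho2 n (f x) (g x)) \<in> borel_measurable M"
  unfolding rho2_def
  by (intro borel_measurable_divide borel_measurable_diff borel_measurable_sum borel_measurable_power borel_measurable_times borel_measurable_const
      cnj_meas[THEN measurable_compose[rotated]] coordI_meas) auto

lemma coord_isCont: "isCont (\<lambda>f::nat\<Rightarrow>complex. f j) x"
proof -
  have "continuous_on UNIV (\<lambda>f::nat\<Rightarrow>complex. f j)" by simp
  then show ?thesis using continuous_on_eq_continuous_at[OF open_UNIV] by blast
qed

lemma coord_cont: "continuous F h \<Longrightarrow> continuous F (\<lambda>y. (h y) (j::nat) :: complex)"
  unfolding continuous_def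
  by (rule isCont_tendsto_compose[where g="\<lambda>f. f j", OF coord_isCont])

lemma rho_cont[continuous_intros]: "continuous F h \<Longrightarrow> continuous F (\<lambda>y. rho n (h y))"
proof -
  assume "continuous F h"
  then have hj: "\<And>j. continuous F (\<lambda>y. h y j)" by (rule coord_cont)
  have "continuous F (\<lambda>y. Im (h y (n - 1)) - (\<Sum>j<n - 1. (Im (h y j))\<^sup>2))"
    by (intro continuous_intros continuous_Im hj)
  then show ?thesis unfolding rho_def .
qed

lemma rho2_cont[continuous_intros]: "continuous F h \<Longrightarrow> continuous F g \<Longrightarrow> continuous F (\<lambda>y. rho2 n (h y) (g y))"
proof -
  assume "continuous F h" "continuous F g"
  then have hj: "\<And>j. continuous F (\<lambda>y. h y j)" "\<And>j. continuous F (\<lambda>y. g y j)" by (auto intro: coord_cont)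
  have "continuous F (\<lambda>y. ((\<Sum>j<n - 1. (h y j - cnj (g y j))\<^sup>2) - 2 * \<i> * (h y (n - 1) - cnj (g y (n - 1)))) * (1/4))"
    by (intro continuous_intros continuous_cnj hj)
  then show ?thesis unfolding rho2_def by simp
qed

lemma Re_rho2: "Re (rho2 n z u) = ((\<Sum>j<n-1. (Re (z j) - Re (u j))^2 - (Im (z j) + Im (u j))^2) + 2 * (Im (z (n-1)) + Im (u (n-1)))) / 4"
  by (simp add: rho2_def Re_sum power2_eq_square algebra_simps)

lemma Re_rho2_ge: "Re (rho2 n z u) \<ge> (rho n z + rho n u) / 2"
proof -
  have "(\<Sum>j<n-1. (Re (z j) - Re (u j))^2 - (Im (z j) + Im (u j))^2) \<ge> (\<Sum>j<n-1. - 2 * (Im (z j))^2 - 2 * (Im (u j))^2)"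
  proof (rule sum_mono)
    fix j
    have "(Im (z j) + Im (u j))^2 \<le> 2 * (Im (z j))^2 + 2 * (Im (u j))^2"
      using sum_squares_ge_zero[of "Im (z j) - Im (u j)" 0] by (simp add: power2_eq_square algebra_simps)
    then show "- 2 * (Im (z j))^2 - 2 * (Im (u j))^2 \<le> (Re (z j) - Re (u j))^2 - (Im (z j) + Im (u j))^2"
      by (smt (verit) zero_le_power2)
  qed
  also have "(\<Sum>j<n-1. - 2 * (Im (z j))^2 - 2 * (Im (u j))^2) = - 2 * (\<Sum>j<n-1. (Im (z j))^2) - 2 * (\<Sum>j<n-1. (Im (u j))^2)"
    by (simp add: sum_subtractf sum_distrib_left)
  finally show ?thesis unfolding Re_rho2 rho_def by simp
qed

lemma cmod_rho2_ge: "cmod (rho2 n z u) \<ge> (rho n z + rho n u) / 2"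
  using Re_rho2_ge[of n z u] complex_Re_le_cmod[of "rho2 n z u"] by linarith

definition pt :: "nat \<Rightarrow> real \<Rightarrow> nat \<Rightarrow> complex" where
  "pt n t = (\<lambda>j. if j = n - 1 then Complex 0 t else if j < n then 0 else undefined)"

lemma pt_space: "0 < n \<Longrightarrow> pt n t \<in> space (CV n)"
  by (auto simp: space_CV pt_def PiE_iff extensional_def)

lemma rho_pt: "0 < n \<Longrightarrow> rho n (pt n t) = t"
  by (auto simp: rho_def pt_def intro!: sum.neutral)

lemma pt_TB: "0 < n \<Longrightarrow> 0 < t \<Longrightarrow> pt n t \<in> TB n"
  by (simp add: TB_def pt_space rho_pt)

lemma rho2_pt: "0 < n \<Longrightarrow> rho2 n (pt n t) (pt n s) = of_real ((t + s) / 2)"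
  by (simp add: rho2_def pt_def complex_eq_iff)

lemma unb_pow: assumes "d \<noteq> (0::real)" shows "\<exists>t>0. t powr d > M"
proof -
  define t where "t = (\<bar>M\<bar> + 1) powr (1/d)"
  have "t > 0" unfolding t_def by simp
  moreover have "t powr d = \<bar>M\<bar> + 1" unfolding t_def using assms by (simp add: powr_powr)
  ultimately show ?thesis by (intro exI[of _ t]) auto
qed

lemma unb_pow_small: assumes "e < (0::real)" shows "\<exists>t>0. t \<le> 1 \<and> t powr e > M"
proof -
  define t where "t = (\<bar>M\<bar> + 1) powr (1/e)"
  have "t > 0" unfolding t_def by simp
  moreover have "t powr e = \<bar>M\<bar> + 1" unfolding t_def using assms by (simp add: powr_powr)
  moreover have "t \<le> (\<bar>M\<bar> + 1) powr 0" unfolding t_def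
    by (rule powr_mono) (use assms in \<open>auto simp: divide_le_0_iff\<close>)
  moreover have "(\<bar>M\<bar> + 1) powr 0 = (1::real)" by (smt (verit) abs_ge_zero powr_zero_eq_one)
  ultimately show ?thesis by (intro exI[of _ t]) auto
qed

lemma mid_bound: assumes "0 < t" "t \<le> (1::real)" shows "((t + 1) / 2) powr c \<le> 2 powr \<bar>c\<bar>"
proof (cases "c \<ge> 0")
  case True
  have "((t + 1) / 2) powr c \<le> 1" using assms True by (intro powr_le1) auto
  also have "1 \<le> 2 powr \<bar>c\<bar>" by (rule ge_one_powr_ge_zero) auto
  finally show ?thesis .
next
  case False
  let ?x = "(t + 1) / 2"
  have x: "0 < ?x" "1/?x \<le> 2" using assms by (auto simp: field_simps)
  have "?x powr c = (1/?x) powr (-c)" using x by (simp add: powr_divide powr_minus field_simps)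
  also have "\<dots> \<le> 2 powr (-c)" using x False by (intro powr_mono2) auto
  finally show ?thesis using False by simp
qed

lemma cond_from_bound:
  fixes a \<beta> C c :: real
  assumes H: "\<And>t s. 0 < t \<Longrightarrow> 0 < s \<Longrightarrow> t powr a * s powr \<beta> \<le> C * ((t + s) / 2) powr c"
  shows "c = a + \<beta> \<and> 0 \<le> a \<and> 0 \<le> \<beta>"
proof (intro conjI)
  show c: "c = a + \<beta>"
  proof (rule ccontr)
    assume "c \<noteq> a + \<beta>"
    then obtain t where t: "t > 0" "t powr (a + \<beta> - c) > C" using unb_pow[of "a + \<beta> - c" C] by auto
    have "t powr (a + \<beta>) \<le> C * t powr c" using H[OF t(1) t(1)] by (simp add: powr_add)
    then have "t powr (a + \<beta>) / t powr c \<le> C" using t(1) by (simp add: divide_le_eq)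
    then show False using t by (simp add: powr_diff)
  qed
  show "0 \<le> a"
  proof (rule ccontr)
    assume "\<not> 0 \<le> a"
    then obtain t where t: "t > 0" "t \<le> 1" "t powr a > \<bar>C\<bar> * 2 powr \<bar>c\<bar>"
      using unb_pow_small[of a "\<bar>C\<bar> * 2 powr \<bar>c\<bar>"] by auto
    have "t powr a \<le> C * ((t + 1) / 2) powr c" using H[OF t(1), of 1] by simp
    also have "\<dots> \<le> \<bar>C\<bar> * ((t + 1) / 2) powr c" by (intro mult_right_mono) auto
    also have "\<dots> \<le> \<bar>C\<bar> * 2 powr \<bar>c\<bar>" using mid_bound[OF t(1,2)] by (intro mult_left_mono) auto
    finally show False using t by simp
  qed
  show "0 \<le> \<beta>"
  proof (rule ccontr)
    assume "\<not> 0 \<le> \<beta>"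
    then obtain s where t: "s > 0" "s \<le> 1" "s powr \<beta> > \<bar>C\<bar> * 2 powr \<bar>c\<bar>"
      using unb_pow_small[of \<beta> "\<bar>C\<bar> * 2 powr \<bar>c\<bar>"] by auto
    have "s powr \<beta> \<le> C * ((s + 1) / 2) powr c" using H[OF _ t(1), of 1] by (simp add: add.commute)
    also have "\<dots> \<le> \<bar>C\<bar> * ((s + 1) / 2) powr c" by (intro mult_right_mono) auto
    also have "\<dots> \<le> \<bar>C\<bar> * 2 powr \<bar>c\<bar>" using mid_bound[OF t(1,2)] by (intro mult_left_mono) auto
    finally show False using t by simp
  qed
qed

lemma ev_gt: fixes g :: "'a::t2_space \<Rightarrow> real"
  assumes "isCont g x0" "c < g x0" shows "eventually (\<lambda>x. c < g x) (nhds x0)"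
proof -
  have "eventually (\<lambda>x. c < g x) (at x0)" using assms unfolding isCont_def by (rule order_tendstoD(1))
  then have "eventually (\<lambda>x. x \<noteq> x0 \<longrightarrow> x \<in> UNIV \<longrightarrow> c < g x) (nhds x0)" by (simp add: eventually_at_filter)
  then show ?thesis by eventually_elim (use assms(2) in auto)
qed

lemma ev_lt: fixes g :: "'a::t2_space \<Rightarrow> real"
  assumes "isCont g x0" "g x0 < c" shows "eventually (\<lambda>x. g x < c) (nhds x0)"
proof -
  have "isCont (\<lambda>x. - g x) x0" using assms(1) by (intro continuous_intros)
  from ev_gt[OF this, of "-c"] assms(2) show ?thesis by simp
qed

lemma psf_lborel: "product_sigma_finite (\<lambda>_::nat. lborel::complex measure)"
  by (simp add: product_sigma_finite_def lborel.sigma_finite_measure_axioms)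

lemma box_sets: "PiE {..<n} (\<lambda>j. ball (y0 j) r) \<in> sets (CV n)"
  unfolding CV_def by (rule sets_PiM_I_finite) auto

lemma box_emeasure: assumes "0 < r"
  shows "0 < emeasure (CV n) (PiE {..<n} (\<lambda>j. ball (y0 j) r))" "emeasure (CV n) (PiE {..<n} (\<lambda>j. ball (y0 j) r)) < \<infinity>"
proof -
  have "emeasure (CV n) (PiE {..<n} (\<lambda>j. ball (y0 j) r)) = (\<Prod>j<n. emeasure lborel (ball (y0 j) r))"
    unfolding CV_def by (rule product_sigma_finite.emeasure_PiM[OF psf_lborel]) auto
  also have "\<dots> = (\<Prod>j<n. ennreal (unit_ball_vol (real DIM(complex)) * r ^ DIM(complex)))"
  proof (rule prod.cong[OF refl])
    fix j show "emeasure lborel (ball (y0 j) r) = ennreal (unit_ball_vol (real DIM(complex)) * r ^ DIM(complex))"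
      using emeasure_ball[of r "y0 j"] assms by simp
  qed
  also have "\<dots> = ennreal ((unit_ball_vol (real DIM(complex)) * r ^ DIM(complex)) ^ n)"
    using assms by (simp add: prod_ennreal ennreal_power)
  finally have e: "emeasure (CV n) (PiE {..<n} (\<lambda>j. ball (y0 j) r)) = ennreal ((unit_ball_vol (real DIM(complex)) * r ^ DIM(complex)) ^ n)" .
  show "0 < emeasure (CV n) (PiE {..<n} (\<lambda>j. ball (y0 j) r))" unfolding e using assms by simp
  show "emeasure (CV n) (PiE {..<n} (\<lambda>j. ball (y0 j) r)) < \<infinity>" unfolding e by simp
qed

lemma box_space: "PiE {..<n} (\<lambda>j. ball (y0 j) r) \<subseteq> space (CV n)"
  unfolding space_CV by (rule PiE_mono) auto

lemma box_in: assumes "y0 \<in> space (CV n)" "y \<in> PiE {..<n} (\<lambda>j. ball (y0 j) r)"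
  shows "(\<forall>j<n. dist (y j) (y0 j) < r) \<and> (\<forall>j\<ge>n. y j = y0 j)"
  using assms by (auto simp: space_CV PiE_iff extensional_def dist_commute)

lemma TB_space: "z \<in> TB n \<Longrightarrow> z \<in> space (CV n)" and TB_rho: "z \<in> TB n \<Longrightarrow> 0 < rho n z"
  by (auto simp: TB_def)

lemma center_in_box: "y0 \<in> space (CV n) \<Longrightarrow> 0 < r \<Longrightarrow> y0 \<in> PiE {..<n} (\<lambda>j. ball (y0 j) r)"
  by (auto simp: space_CV PiE_iff)

lemma ev_split4:
  assumes "eventually P (nhds ((z0::'a::topological_space, w0::'b::topological_space), (u0::'c::topological_space, e0::'d::topological_space)))"
  obtains Pz Pw Pu Pe where "eventually Pz (nhds z0)" "eventually Pw (nhds w0)" "eventually Pu (nhds u0)" "eventually Pe (nhds e0)"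
    "\<And>z w u e. Pz z \<Longrightarrow> Pw w \<Longrightarrow> Pu u \<Longrightarrow> Pe e \<Longrightarrow> P ((z, w), (u, e))"
proof -
  from assms have "eventually P ((nhds z0 \<times>\<^sub>F nhds w0) \<times>\<^sub>F (nhds u0 \<times>\<^sub>F nhds e0))" by (simp add: nhds_prod)
  then obtain PA PB where AB: "eventually PA (nhds z0 \<times>\<^sub>F nhds w0)" "eventually PB (nhds u0 \<times>\<^sub>F nhds e0)"
    "\<forall>x y. PA x \<longrightarrow> PB y \<longrightarrow> P (x, y)" unfolding eventually_prod_filter by blast
  from AB(1) obtain Pz Pw where A: "eventually Pz (nhds z0)" "eventually Pw (nhds w0)" "\<forall>x y. Pz x \<longrightarrow> Pw y \<longrightarrow> PA (x, y)"
    unfolding eventually_prod_filter by blast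
  from AB(2) obtain Pu Pe where B: "eventually Pu (nhds u0)" "eventually Pe (nhds e0)" "\<forall>x y. Pu x \<longrightarrow> Pe y \<longrightarrow> PB (x, y)"
    unfolding eventually_prod_filter by blast
  show ?thesis by (rule that[OF A(1,2) B(1,2)]) (use A(3) B(3) AB(3) in blast)
qed

lemma nec_pointwise:
  fixes K :: "(nat \<Rightarrow> complex) \<Rightarrow> (nat \<Rightarrow> complex) \<Rightarrow> (nat \<Rightarrow> complex) \<Rightarrow> (nat \<Rightarrow> complex) \<Rightarrow> complex"
  assumes n: "0 < n"
  and bd: "\<forall>f \<in> borel_measurable (CV n \<Otimes>\<^sub>M CV n). mixnorm11 n \<alpha> f < \<infinity> \<longrightarrow>
        (AE p in CV n \<Otimes>\<^sub>M CV n. p \<in> TB n \<times> TB n \<longrightarrow>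
           set_integrable (CV n \<Otimes>\<^sub>M CV n) (TB n \<times> TB n)
             (\<lambda>(u, \<eta>). K (fst p) (snd p) u \<eta> * f (u, \<eta>))) \<and>
        (AE p in CV n \<Otimes>\<^sub>M CV n. p \<in> TB n \<times> TB n \<longrightarrow>
           cmod (int_op n a K f p) \<le> C * enn2real (mixnorm11 n \<alpha> f))"
  and cont: "\<And>z w u e. z \<in> TB n \<Longrightarrow> w \<in> TB n \<Longrightarrow> u \<in> TB n \<Longrightarrow> e \<in> TB n \<Longrightarrow>
     isCont (\<lambda>x. K (fst (fst x)) (snd (fst x)) (fst (snd x)) (snd (snd x))) ((z, w), (u, e))"
  and pts: "z0 \<in> TB n" "w0 \<in> TB n" "u0 \<in> TB n" "e0 \<in> TB n"
  shows "rho n z0 powr fst a * rho n w0 powr snd a * cmod (K z0 w0 u0 e0) \<le> C * (rho n u0 powr fst \<alpha> * rho n e0 powr snd \<alpha>)"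
proof (rule ccontr)
  assume neg: "\<not> ?thesis"
  define A0 where "A0 = rho n z0 powr fst a * rho n w0 powr snd a"
  define B0 where "B0 = rho n u0 powr fst \<alpha> * rho n e0 powr snd \<alpha>"
  define k0 where "k0 = complex_of_real A0 * K z0 w0 u0 e0"
  have A0: "0 \<le> A0" unfolding A0_def by simp
  have ck0: "cmod k0 = A0 * cmod (K z0 w0 u0 e0)" unfolding k0_def using A0 by (simp add: norm_mult)
  have gt: "C * B0 < cmod k0" using neg unfolding ck0 A0_def B0_def by simp
  define \<theta> where "\<theta> = (if k0 = 0 then 1 else cnj k0 / complex_of_real (cmod k0))"
  have th1: "cmod \<theta> = 1" unfolding \<theta>_def by (simp add: norm_divide)
  have th2: "Re (\<theta> * k0) = cmod k0"
  proof (cases "k0 = 0")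
    case False
    have "\<theta> * k0 = complex_of_real ((cmod k0)^2) / complex_of_real (cmod k0)"
    proof -
      have "\<theta> * k0 = (k0 * cnj k0) / complex_of_real (cmod k0)" unfolding \<theta>_def using False by (simp add: mult.commute)
      then show ?thesis by (simp only: complex_norm_square)
    qed
    also have "\<dots> = complex_of_real (cmod k0)" using False by (simp add: power2_eq_square)
    finally show ?thesis by simp
  qed (simp add: \<theta>_def)
  define \<delta> where "\<delta> = (cmod k0 - C * B0) / 2"
  have dpos: "0 < \<delta>" unfolding \<delta>_def using gt by simp
  define \<Phi> where "\<Phi> x = Re (\<theta> * (complex_of_real (rho n (fst (fst x)) powr fst a * rho n (snd (fst x)) powr snd a) *
      K (fst (fst x)) (snd (fst x)) (fst (snd x)) (snd (snd x)))) -
      C * (rho n (fst (snd x)) powr fst \<alpha> * rho n (snd (snd x)) powr snd \<alpha>)" for x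
  define x0 where "x0 = ((z0, w0), (u0, e0))"
  have rpos: "0 < rho n z0" "0 < rho n w0" "0 < rho n u0" "0 < rho n e0" using pts by (auto simp: TB_def)
  have Phi0: "\<Phi> x0 = cmod k0 - C * B0"
    unfolding \<Phi>_def x0_def using th2 by (simp add: k0_def A0_def B0_def mult.assoc)
  have cK: "isCont (\<lambda>x. K (fst (fst x)) (snd (fst x)) (fst (snd x)) (snd (snd x))) x0"
    unfolding x0_def by (rule cont[OF pts])
  have cPhi: "isCont \<Phi> x0"
    unfolding \<Phi>_def using rpos cK unfolding x0_def
    by (intro continuous_intros continuous_Re) (auto)
  have cr1: "isCont (\<lambda>x. rho n (fst (fst x))) x0" "isCont (\<lambda>x. rho n (snd (fst x))) x0"
       "isCont (\<lambda>x. rho n (fst (snd x))) x0" "isCont (\<lambda>x. rho n (snd (snd x))) x0"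
    by (intro continuous_intros)+
  have cr2: "isCont (\<lambda>x. rho n (fst (snd x)) powr fst \<alpha>) x0" "isCont (\<lambda>x. rho n (snd (snd x)) powr snd \<alpha>) x0"
    using rpos unfolding x0_def by (intro continuous_intros; simp)+
  define P where "P x \<longleftrightarrow> 0 < rho n (fst (fst x)) \<and> 0 < rho n (snd (fst x)) \<and> 0 < rho n (fst (snd x)) \<and> 0 < rho n (snd (snd x))
      \<and> \<delta> < \<Phi> x \<and> rho n (fst (snd x)) powr fst \<alpha> < rho n u0 powr fst \<alpha> + 1 \<and> rho n (snd (snd x)) powr snd \<alpha> < rho n e0 powr snd \<alpha> + 1" for x
  have evP: "eventually P (nhds x0)"
    unfolding P_def
    apply (intro eventually_conj ev_gt ev_lt cr1 cr2 cPhi)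
    using rpos dpos Phi0 gt unfolding \<delta>_def x0_def by (auto simp: mult.commute)
  obtain Pz Pw Pu Pe where ev4: "eventually Pz (nhds z0)" "eventually Pw (nhds w0)" "eventually Pu (nhds u0)" "eventually Pe (nhds e0)"
    and PP: "\<And>z w u e. Pz z \<Longrightarrow> Pw w \<Longrightarrow> Pu u \<Longrightarrow> Pe e \<Longrightarrow> P ((z, w), (u, e))"
    using ev_split4[OF evP[unfolded x0_def]] by blast
  obtain rz where rz: "rz > 0" "\<And>y. (\<forall>j<n. dist (y j) (z0 j) < rz) \<and> (\<forall>j\<ge>n. y j = z0 j) \<Longrightarrow> Pz y"
    using eventually_nhds_fun_box[OF ev4(1), of n] by blast
  obtain rw where rw: "rw > 0" "\<And>y. (\<forall>j<n. dist (y j) (w0 j) < rw) \<and> (\<forall>j\<ge>n. y j = w0 j) \<Longrightarrow> Pw y"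
    using eventually_nhds_fun_box[OF ev4(2), of n] by blast
  obtain ru where ru: "ru > 0" "\<And>y. (\<forall>j<n. dist (y j) (u0 j) < ru) \<and> (\<forall>j\<ge>n. y j = u0 j) \<Longrightarrow> Pu y"
    using eventually_nhds_fun_box[OF ev4(3), of n] by blast
  obtain re where re: "re > 0" "\<And>y. (\<forall>j<n. dist (y j) (e0 j) < re) \<and> (\<forall>j\<ge>n. y j = e0 j) \<Longrightarrow> Pe y"
    using eventually_nhds_fun_box[OF ev4(4), of n] by blast
  define r where "r = min (min rz rw) (min ru re)"
  have r: "0 < r" "r \<le> rz" "r \<le> rw" "r \<le> ru" "r \<le> re" unfolding r_def using rz ru rw re by auto
  define Z where "Z = PiE {..<n} (\<lambda>j. ball (z0 j) r)"
  define W where "W = PiE {..<n} (\<lambda>j. ball (w0 j) r)"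
  define U where "U = PiE {..<n} (\<lambda>j. ball (u0 j) r)"
  define V where "V = PiE {..<n} (\<lambda>j. ball (e0 j) r)"
  have inZ: "Pz y" if "y \<in> Z" for y using box_in[OF TB_space[OF pts(1)] that[unfolded Z_def]] r by (intro rz(2)) force
  have inW: "Pw y" if "y \<in> W" for y using box_in[OF TB_space[OF pts(2)] that[unfolded W_def]] r by (intro rw(2)) force
  have inU: "Pu y" if "y \<in> U" for y using box_in[OF TB_space[OF pts(3)] that[unfolded U_def]] r by (intro ru(2)) force
  have inV: "Pe y" if "y \<in> V" for y using box_in[OF TB_space[OF pts(4)] that[unfolded V_def]] r by (intro re(2)) force
  have ctr: "z0 \<in> Z" "w0 \<in> W" "u0 \<in> U" "e0 \<in> V" unfolding Z_def W_def U_def V_def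
    using center_in_box[OF TB_space r(1)] pts by auto
  have PZ: "P ((z, w), (u, e))" if "z \<in> Z" "w \<in> W" "u \<in> U" "e \<in> V" for z w u e
    using PP inZ inW inU inV that by blast
  have sets: "Z \<in> sets (CV n)" "W \<in> sets (CV n)" "U \<in> sets (CV n)" "V \<in> sets (CV n)"
    unfolding Z_def W_def U_def V_def by (rule box_sets)+
  have spc: "Z \<subseteq> space (CV n)" "W \<subseteq> space (CV n)" "U \<subseteq> space (CV n)" "V \<subseteq> space (CV n)"
    unfolding Z_def W_def U_def V_def by (rule box_space)+
  have emZ: "0 < emeasure (CV n) Z" "emeasure (CV n) Z < \<infinity>" unfolding Z_def using box_emeasure[OF r(1)] by auto
  have emW: "0 < emeasure (CV n) W" "emeasure (CV n) W < \<infinity>" unfolding W_def using box_emeasure[OF r(1)] by auto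
  have emU: "0 < emeasure (CV n) U" "emeasure (CV n) U < \<infinity>" unfolding U_def using box_emeasure[OF r(1)] by auto
  have emV: "0 < emeasure (CV n) V" "emeasure (CV n) V < \<infinity>" unfolding V_def using box_emeasure[OF r(1)] by auto
  have subTB: "Z \<subseteq> TB n" "W \<subseteq> TB n" "U \<subseteq> TB n" "V \<subseteq> TB n"
  proof -
    show "Z \<subseteq> TB n" using spc(1) PZ[OF _ ctr(2,3,4)] by (auto simp: TB_def P_def)
    show "W \<subseteq> TB n" using spc(2) PZ[OF ctr(1) _ ctr(3,4)] by (auto simp: TB_def P_def)
    show "U \<subseteq> TB n" using spc(3) PZ[OF ctr(1,2) _ ctr(4)] by (auto simp: TB_def P_def)
    show "V \<subseteq> TB n" using spc(4) PZ[OF ctr(1,2,3)] by (auto simp: TB_def P_def)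
  qed
  have UV: "U \<times> V \<in> sets (CV n \<Otimes>\<^sub>M CV n)" "Z \<times> W \<in> sets (CV n \<Otimes>\<^sub>M CV n)"
    using sets by auto
  interpret P2: pair_sigma_finite "CV n" "CV n" by (rule psf_CV)
  have emUV: "emeasure (CV n \<Otimes>\<^sub>M CV n) (U \<times> V) = emeasure (CV n) U * emeasure (CV n) V"
    by (rule sigma_finite_measure.emeasure_pair_measure_Times[OF sf_CV]) (use sets in auto)
  have emZW: "emeasure (CV n \<Otimes>\<^sub>M CV n) (Z \<times> W) = emeasure (CV n) Z * emeasure (CV n) W"
    by (rule sigma_finite_measure.emeasure_pair_measure_Times[OF sf_CV]) (use sets in auto)
  have emUV_fin: "emeasure (CV n \<Otimes>\<^sub>M CV n) (U \<times> V) < \<infinity>"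
    unfolding emUV using emU emV by (simp add: ennreal_mult_less_top)
  have emUV_pos: "0 < emeasure (CV n \<Otimes>\<^sub>M CV n) (U \<times> V)"
    unfolding emUV using emU emV by (simp add: zero_less_iff_neq_zero)
  have emZW_pos: "0 < emeasure (CV n \<Otimes>\<^sub>M CV n) (Z \<times> W)"
    unfolding emZW using emZ emW by (simp add: zero_less_iff_neq_zero)
  define f :: "(nat \<Rightarrow> complex) \<times> (nat \<Rightarrow> complex) \<Rightarrow> complex" where "f = indicator (U \<times> V)"
  have fmeas: "f \<in> borel_measurable (CV n \<Otimes>\<^sub>M CV n)" unfolding f_def using UV(1) by measurable
  define h where "h p = indicator (U \<times> V) p * (rho n (fst p) powr fst \<alpha> * rho n (snd p) powr snd \<alpha>)" for p
  have hmeas: "h \<in> borel_measurable (CV n \<Otimes>\<^sub>M CV n)"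
    unfolding h_def
    by (intro borel_measurable_times borel_measurable_indicator UV powr_real_measurable rho_meas[OF n] measurable_fst measurable_snd borel_measurable_const)
  have h_nonneg: "0 \<le> h p" for p unfolding h_def by simp
  have mix: "mixnorm11 n \<alpha> f = (\<integral>\<^sup>+ p. ennreal (h p) \<partial>(CV n \<Otimes>\<^sub>M CV n))"
  proof -
    have inner: "(\<integral>\<^sup>+ z. ennreal (indicator (TB n) z * cmod (f (z, w)) * rho n z powr fst \<alpha>) \<partial>CV n)
        * ennreal (indicator (TB n) w * rho n w powr snd \<alpha>) = (\<integral>\<^sup>+ z. ennreal (h (z, w)) \<partial>CV n)" for w
    proof -
      have "(\<integral>\<^sup>+ z. ennreal (indicator (TB n) z * cmod (f (z, w)) * rho n z powr fst \<alpha>) \<partial>CV n)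
          = (\<integral>\<^sup>+ z. ennreal (indicator U z * indicator V w * rho n z powr fst \<alpha>) \<partial>CV n)"
        by (rule nn_integral_cong) (use subTB in \<open>auto simp: f_def indicator_def\<close>)
      also have "\<dots> * ennreal (indicator (TB n) w * rho n w powr snd \<alpha>) =
          (\<integral>\<^sup>+ z. ennreal (indicator U z * indicator V w * rho n z powr fst \<alpha>) * ennreal (indicator (TB n) w * rho n w powr snd \<alpha>) \<partial>CV n)"
        by (rule nn_integral_multc[symmetric])
          (intro measurable_compose[OF _ measurable_ennreal] borel_measurable_times borel_measurable_indicator sets
            borel_measurable_const powr_real_measurable rho_meas[OF n] measurable_ident_sets refl)
      also have "\<dots> = (\<integral>\<^sup>+ z. ennreal (h (z, w)) \<partial>CV n)"
      proof (rule nn_integral_cong)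
        fix z
        have "ennreal (indicator U z * indicator V w * rho n z powr fst \<alpha>) * ennreal (indicator (TB n) w * rho n w powr snd \<alpha>)
          = ennreal (indicator U z * indicator V w * rho n z powr fst \<alpha> * (indicator (TB n) w * rho n w powr snd \<alpha>))"
          by (rule ennreal_mult''[symmetric]) simp
        also have "indicator U z * indicator V w * rho n z powr fst \<alpha> * (indicator (TB n) w * rho n w powr snd \<alpha>) = h (z, w)"
          using subTB by (auto simp: h_def indicator_def)
        finally show "ennreal (indicator U z * indicator V w * rho n z powr fst \<alpha>) * ennreal (indicator (TB n) w * rho n w powr snd \<alpha>)
          = ennreal (h (z, w))" .
      qed
      finally show ?thesis .
    qed
    show ?thesis unfolding mixnorm11_def inner
      by (rule P2.nn_integral_snd) (rule measurable_compose[OF hmeas measurable_ennreal])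
  qed
  define L where "L = (rho n u0 powr fst \<alpha> + 1) * (rho n e0 powr snd \<alpha> + 1)"
  have hL: "h p \<le> L * indicator (U \<times> V) p" for p
  proof (cases "p \<in> U \<times> V")
    case True
    then obtain u e where p: "p = (u, e)" "u \<in> U" "e \<in> V" by auto
    have "P ((z0, w0), (u, e))" using PZ[OF ctr(1,2) p(2,3)] .
    then have "rho n u powr fst \<alpha> < rho n u0 powr fst \<alpha> + 1" "rho n e powr snd \<alpha> < rho n e0 powr snd \<alpha> + 1"
      unfolding P_def by auto
    then have "rho n u powr fst \<alpha> * rho n e powr snd \<alpha> \<le> L" unfolding L_def
      by (intro mult_mono) auto
    then show ?thesis using True p by (simp add: h_def)
  qed (simp add: h_def)
  have Lnn: "0 \<le> L" unfolding L_def by simp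
  have fin: "(\<integral>\<^sup>+ p. ennreal (h p) \<partial>(CV n \<Otimes>\<^sub>M CV n)) < \<infinity>"
  proof -
    have "(\<integral>\<^sup>+ p. ennreal (h p) \<partial>(CV n \<Otimes>\<^sub>M CV n)) \<le> (\<integral>\<^sup>+ p. ennreal L * indicator (U \<times> V) p \<partial>(CV n \<Otimes>\<^sub>M CV n))"
    proof (rule nn_integral_mono)
      fix p
      have "ennreal (h p) \<le> ennreal (L * indicator (U \<times> V) p)" using hL by (rule ennreal_leI)
      also have "\<dots> = ennreal L * indicator (U \<times> V) p" using Lnn by (simp add: ennreal_mult ennreal_indicator)
      finally show "ennreal (h p) \<le> ennreal L * indicator (U \<times> V) p" .
    qed
    also have "\<dots> = ennreal L * emeasure (CV n \<Otimes>\<^sub>M CV n) (U \<times> V)" by (rule nn_integral_cmult_indicator[OF UV(1)])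
    also have "\<dots> < \<infinity>" using emUV_fin by (simp add: ennreal_mult_less_top)
    finally show ?thesis .
  qed
  have hint: "integrable (CV n \<Otimes>\<^sub>M CV n) h"
    by (rule integrableI_nonneg[OF hmeas]) (use fin h_nonneg in auto)
  have Nval: "enn2real (mixnorm11 n \<alpha> f) = integral\<^sup>L (CV n \<Otimes>\<^sub>M CV n) h"
    unfolding mix by (rule integral_eq_nn_integral[symmetric]) (use hmeas h_nonneg in auto)
  have mixfin: "mixnorm11 n \<alpha> f < \<infinity>" unfolding mix using fin .
  from bd fmeas mixfin have AEs:
    "AE p in CV n \<Otimes>\<^sub>M CV n. (p \<in> TB n \<times> TB n \<longrightarrow>
           set_integrable (CV n \<Otimes>\<^sub>M CV n) (TB n \<times> TB n) (\<lambda>(u, \<eta>). K (fst p) (snd p) u \<eta> * f (u, \<eta>))) \<and>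
       (p \<in> TB n \<times> TB n \<longrightarrow> cmod (int_op n a K f p) \<le> C * enn2real (mixnorm11 n \<alpha> f))"
    by (auto intro: AE_conjI)
  then obtain N0 where N0: "{x \<in> space (CV n \<Otimes>\<^sub>M CV n). \<not> ((x \<in> TB n \<times> TB n \<longrightarrow>
           set_integrable (CV n \<Otimes>\<^sub>M CV n) (TB n \<times> TB n) (\<lambda>(u, \<eta>). K (fst x) (snd x) u \<eta> * f (u, \<eta>))) \<and>
       (x \<in> TB n \<times> TB n \<longrightarrow> cmod (int_op n a K f x) \<le> C * enn2real (mixnorm11 n \<alpha> f)))} \<subseteq> N0"
    "emeasure (CV n \<Otimes>\<^sub>M CV n) N0 = 0" "N0 \<in> sets (CV n \<Otimes>\<^sub>M CV n)"
    by (rule AE_E)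
  have "\<not> Z \<times> W \<subseteq> N0"
  proof
    assume "Z \<times> W \<subseteq> N0"
    then have "emeasure (CV n \<Otimes>\<^sub>M CV n) (Z \<times> W) \<le> emeasure (CV n \<Otimes>\<^sub>M CV n) N0"
      by (rule emeasure_mono) (rule N0(3))
    then show False using N0(2) emZW_pos by simp
  qed
  then obtain z w where zw: "z \<in> Z" "w \<in> W" "(z, w) \<notin> N0" by auto
  have zwsp: "(z, w) \<in> space (CV n \<Otimes>\<^sub>M CV n)" using zw spc by (auto simp: space_pair_measure)
  have zwTB: "(z, w) \<in> TB n \<times> TB n" using zw subTB by auto
  have si: "set_integrable (CV n \<Otimes>\<^sub>M CV n) (TB n \<times> TB n) (\<lambda>(u, \<eta>). K z w u \<eta> * f (u, \<eta>))"
    and bnd: "cmod (int_op n a K f (z, w)) \<le> C * enn2real (mixnorm11 n \<alpha> f)"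
    using N0(1) zw(3) zwsp zwTB by auto
  define G where "G q = indicator (TB n \<times> TB n) q *\<^sub>R (case q of (u, \<eta>) \<Rightarrow> K z w u \<eta> * f (u, \<eta>))" for q
  have Gint: "integrable (CV n \<Otimes>\<^sub>M CV n) G" using si unfolding set_integrable_def G_def .
  define Az where "Az = rho n z powr fst a * rho n w powr snd a"
  have opval: "int_op n a K f (z, w) = complex_of_real Az * integral\<^sup>L (CV n \<Otimes>\<^sub>M CV n) G"
    unfolding int_op_def Az_def G_def set_lebesgue_integral_def by simp
  have Gint2: "integrable (CV n \<Otimes>\<^sub>M CV n) (\<lambda>q. \<theta> * complex_of_real Az * G q)"
    using Gint by (rule integrable_mult_right)
  have ReEq: "Re (\<theta> * int_op n a K f (z, w)) = integral\<^sup>L (CV n \<Otimes>\<^sub>M CV n) (\<lambda>q. Re (\<theta> * complex_of_real Az * G q))"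
  proof -
    have i1: "integral\<^sup>L (CV n \<Otimes>\<^sub>M CV n) (\<lambda>q. \<theta> * complex_of_real Az * G q) = \<theta> * complex_of_real Az * integral\<^sup>L (CV n \<Otimes>\<^sub>M CV n) G"
      by (rule integral_mult_right_zero)
    have e1: "\<theta> * int_op n a K f (z, w) = integral\<^sup>L (CV n \<Otimes>\<^sub>M CV n) (\<lambda>q. \<theta> * complex_of_real Az * G q)"
      unfolding opval i1 by (simp only: mult.assoc)
    show ?thesis unfolding e1 by (rule integral_Re[OF Gint2, symmetric])
  qed
  have lower: "C * h q + \<delta> * indicator (U \<times> V) q \<le> Re (\<theta> * complex_of_real Az * G q)" for q
  proof (cases "q \<in> U \<times> V")
    case True
    then obtain u e where q: "q = (u, e)" "u \<in> U" "e \<in> V" by auto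
    have "P ((z, w), (u, e))" by (rule PZ[OF zw(1,2) q(2,3)])
    then have "\<delta> < \<Phi> ((z, w), (u, e))" unfolding P_def by auto
    then have "C * (rho n u powr fst \<alpha> * rho n e powr snd \<alpha>) + \<delta> \<le> Re (\<theta> * (complex_of_real Az * K z w u e))"
      unfolding \<Phi>_def Az_def by simp
    moreover have "G q = K z w u e"
    proof -
      have "(u, e) \<in> TB n \<times> TB n" using q subTB by auto
      then show ?thesis using q by (simp add: G_def f_def)
    qed
    ultimately show ?thesis using q by (simp add: h_def mult.assoc)
  next
    case False
    then have "G q = 0" by (auto simp: G_def f_def indicator_def split: prod.splits)
    then show ?thesis using False by (simp add: h_def)
  qed
  have indint: "integrable (CV n \<Otimes>\<^sub>M CV n) (indicator (U \<times> V) :: _ \<Rightarrow> real)"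
    using UV(1) emUV_fin by (rule integrable_real_indicator)
  have "integral\<^sup>L (CV n \<Otimes>\<^sub>M CV n) (\<lambda>q. C * h q + \<delta> * indicator (U \<times> V) q) \<le>
        integral\<^sup>L (CV n \<Otimes>\<^sub>M CV n) (\<lambda>q. Re (\<theta> * complex_of_real Az * G q))"
  proof (rule integral_mono)
    show "integrable (CV n \<Otimes>\<^sub>M CV n) (\<lambda>q. Re (\<theta> * complex_of_real Az * G q))" by (rule integrable_Re[OF Gint2])
    show "integrable (CV n \<Otimes>\<^sub>M CV n) (\<lambda>q. C * h q + \<delta> * indicator (U \<times> V) q)"
      using hint indint by auto
  qed (rule lower)
  moreover have "integral\<^sup>L (CV n \<Otimes>\<^sub>M CV n) (\<lambda>q. C * h q + \<delta> * indicator (U \<times> V) q) =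
      C * integral\<^sup>L (CV n \<Otimes>\<^sub>M CV n) h + \<delta> * measure (CV n \<Otimes>\<^sub>M CV n) (U \<times> V)"
    using hint indint UV(1) by (simp add: Int_absorb2 sets.sets_into_space)
  moreover have "0 < measure (CV n \<Otimes>\<^sub>M CV n) (U \<times> V)"
    unfolding measure_def using emUV_pos emUV_fin by (simp add: enn2real_positive_iff)
  moreover have "Re (\<theta> * int_op n a K f (z, w)) \<le> cmod (int_op n a K f (z, w))"
  proof -
    have "Re (\<theta> * int_op n a K f (z, w)) \<le> cmod (\<theta> * int_op n a K f (z, w))" by (rule complex_Re_le_cmod)
    also have "\<dots> = cmod (int_op n a K f (z, w))" using th1 by (simp add: norm_mult)
    finally show ?thesis .
  qed
  ultimately show False using bnd dpos ReEq Nval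
    by (smt (verit) mult_pos_pos)
qed

lemma rho2_pos: "z \<in> TB n \<Longrightarrow> u \<in> TB n \<Longrightarrow> 0 < Re (rho2 n z u)"
  using Re_rho2_ge[of n z u] by (auto simp: TB_def)

lemma rho2_nz: "z \<in> TB n \<Longrightarrow> u \<in> TB n \<Longrightarrow> 0 < cmod (rho2 n z u)"
  using rho2_pos[of z n u] complex_Re_le_cmod[of "rho2 n z u"] by linarith

lemma rho2_notnonpos: "z \<in> TB n \<Longrightarrow> u \<in> TB n \<Longrightarrow> rho2 n z u \<notin> \<real>\<^sub>\<le>\<^sub>0"
  using rho2_pos[of z n u] by (auto simp: complex_nonpos_Reals_iff)

lemma kernS_cont:
  assumes "z \<in> TB n" "w \<in> TB n" "u \<in> TB n" "e \<in> TB n"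
  shows "isCont (\<lambda>x. kernS n b c (fst (fst x)) (snd (fst x)) (fst (snd x)) (snd (snd x))) ((z, w), (u, e))"
proof -
  define x0 where "x0 = ((z, w), (u, e))"
  have p: "0 < rho n u" "0 < rho n e" using assms by (auto simp: TB_def)
  have q: "0 < cmod (rho2 n z u)" "0 < cmod (rho2 n w e)" using rho2_nz assms by auto
  have c1: "isCont (\<lambda>x. rho n (fst (snd x))) x0" "isCont (\<lambda>x. rho n (snd (snd x))) x0"
    by (intro rho_cont continuous_fst continuous_snd continuous_ident)+
  have c2: "isCont (\<lambda>x. rho2 n (fst (fst x)) (fst (snd x))) x0" "isCont (\<lambda>x. rho2 n (snd (fst x)) (snd (snd x))) x0"
    by (intro rho2_cont continuous_fst continuous_snd continuous_ident)+
  have c3: "isCont (\<lambda>x. cmod (rho2 n (fst (fst x)) (fst (snd x)))) x0" "isCont (\<lambda>x. cmod (rho2 n (snd (fst x)) (snd (snd x)))) x0"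
    by (rule continuous_norm[OF c2(1)], rule continuous_norm[OF c2(2)])
  have c4: "isCont (\<lambda>x. rho n (fst (snd x)) powr fst b) x0" "isCont (\<lambda>x. rho n (snd (snd x)) powr snd b) x0"
    by (rule continuous_at_within_powr[OF c1(1) continuous_const], use p in \<open>simp add: x0_def\<close>)
       (rule continuous_at_within_powr[OF c1(2) continuous_const], use p in \<open>simp add: x0_def\<close>)
  have c5: "isCont (\<lambda>x. cmod (rho2 n (fst (fst x)) (fst (snd x))) powr fst c) x0"
     "isCont (\<lambda>x. cmod (rho2 n (snd (fst x)) (snd (snd x))) powr snd c) x0"
    by (rule continuous_at_within_powr[OF c3(1) continuous_const], use q in \<open>simp add: x0_def\<close>)
       (rule continuous_at_within_powr[OF c3(2) continuous_const], use q in \<open>simp add: x0_def\<close>)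
  have c6: "isCont (\<lambda>x. rho n (fst (snd x)) powr fst b * rho n (snd (snd x)) powr snd b /
       (cmod (rho2 n (fst (fst x)) (fst (snd x))) powr fst c * cmod (rho2 n (snd (fst x)) (snd (snd x))) powr snd c)) x0"
    by (rule continuous_at_within_divide[OF continuous_mult[OF c4] continuous_mult[OF c5]]) (use q in \<open>simp add: x0_def\<close>)
  show ?thesis unfolding kernS_def x0_def[symmetric] by (rule continuous_of_real[OF c6])
qed

lemma kernT_cont:
  assumes "z \<in> TB n" "w \<in> TB n" "u \<in> TB n" "e \<in> TB n"
  shows "isCont (\<lambda>x. kernT n b c (fst (fst x)) (snd (fst x)) (fst (snd x)) (snd (snd x))) ((z, w), (u, e))"
proof -
  define x0 where "x0 = ((z, w), (u, e))"
  have p: "0 < rho n u" "0 < rho n e" using assms by (auto simp: TB_def)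
  have q: "rho2 n z u \<notin> \<real>\<^sub>\<le>\<^sub>0" "rho2 n w e \<notin> \<real>\<^sub>\<le>\<^sub>0" using rho2_notnonpos assms by auto
  have q2: "rho2 n z u \<noteq> 0" "rho2 n w e \<noteq> 0" using rho2_nz assms by fastforce+
  have c1: "isCont (\<lambda>x. rho n (fst (snd x))) x0" "isCont (\<lambda>x. rho n (snd (snd x))) x0"
    by (intro rho_cont continuous_fst continuous_snd continuous_ident)+
  have c2: "isCont (\<lambda>x. rho2 n (fst (fst x)) (fst (snd x))) x0" "isCont (\<lambda>x. rho2 n (snd (fst x)) (snd (snd x))) x0"
    by (intro rho2_cont continuous_fst continuous_snd continuous_ident)+
  have c4: "isCont (\<lambda>x. rho n (fst (snd x)) powr fst b) x0" "isCont (\<lambda>x. rho n (snd (snd x)) powr snd b) x0"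
    by (rule continuous_at_within_powr[OF c1(1) continuous_const], use p in \<open>simp add: x0_def\<close>)
       (rule continuous_at_within_powr[OF c1(2) continuous_const], use p in \<open>simp add: x0_def\<close>)
  have c5: "isCont (\<lambda>x. rho2 n (fst (fst x)) (fst (snd x)) powr complex_of_real (fst c)) x0"
     "isCont (\<lambda>x. rho2 n (snd (fst x)) (snd (snd x)) powr complex_of_real (snd c)) x0"
    by (rule isCont_powr_complex[OF _ c2(1) continuous_const], use q in \<open>simp add: x0_def\<close>)
       (rule isCont_powr_complex[OF _ c2(2) continuous_const], use q in \<open>simp add: x0_def\<close>)
  have c6: "isCont (\<lambda>x. complex_of_real (rho n (fst (snd x)) powr fst b * rho n (snd (snd x)) powr snd b)) x0"
    by (rule continuous_of_real[OF continuous_mult[OF c4]])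
  have "isCont (\<lambda>x. complex_of_real (rho n (fst (snd x)) powr fst b * rho n (snd (snd x)) powr snd b) /
       (rho2 n (fst (fst x)) (fst (snd x)) powr complex_of_real (fst c) * rho2 n (snd (fst x)) (snd (snd x)) powr complex_of_real (snd c))) x0"
    by (rule continuous_at_within_divide[OF c6 continuous_mult[OF c5]]) (use q2 in \<open>simp add: x0_def\<close>)
  then show ?thesis unfolding kernT_def x0_def[symmetric] .
qed

lemma cmod_kernS: "cmod (kernS n b c z w u e) = rho n u powr fst b * rho n e powr snd b /
       (cmod (rho2 n z u) powr fst c * cmod (rho2 n w e) powr snd c)"
  unfolding kernS_def norm_of_real by (rule abs_of_nonneg) simp

lemma cmod_kernT: "cmod (kernT n b c z w u e) = rho n u powr fst b * rho n e powr snd b /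
       (cmod (rho2 n z u) powr fst c * cmod (rho2 n w e) powr snd c)"
  unfolding kernT_def by (simp add: norm_divide norm_mult norm_powr_real_powr')

lemma suff_real:
  fixes t s R a b \<alpha> :: real
  assumes t: "0 < t" and s: "0 < s" and R: "(t + s) / 2 \<le> R" and a: "0 \<le> a" and b: "\<alpha> \<le> b"
  shows "t powr a * s powr b / R powr (a + b - \<alpha>) \<le> 2 powr (a + b - \<alpha>) * s powr \<alpha>"
proof -
  define c where "c = a + b - \<alpha>"
  have c: "0 \<le> c" unfolding c_def using a b by simp
  have Rpos: "0 < R" using R t s by simp
  have "t powr a * s powr (b - \<alpha>) \<le> (t + s) powr a * (t + s) powr (b - \<alpha>)"
    using t s a b by (intro mult_mono powr_mono2) auto
  also have "\<dots> = (t + s) powr c" unfolding c_def by (simp add: powr_add[symmetric] add_diff_eq)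
  also have "\<dots> = 2 powr c * ((t + s) / 2) powr c"
  proof -
    have e: "2 * ((t + s) / 2) = t + s" by simp
    have "(t + s) powr c = (2 * ((t + s) / 2)) powr c" by (simp only: e)
    also have "\<dots> = 2 powr c * ((t + s) / 2) powr c" using t s by (intro powr_mult; simp)
    finally show ?thesis .
  qed
  also have "\<dots> \<le> 2 powr c * R powr c" using t s R c by (intro mult_left_mono powr_mono2) auto
  finally have key: "t powr a * s powr (b - \<alpha>) \<le> 2 powr c * R powr c" .
  have "t powr a * s powr b = (t powr a * s powr (b - \<alpha>)) * s powr \<alpha>" by (simp add: powr_add[symmetric])
  also have "\<dots> \<le> (2 powr c * R powr c) * s powr \<alpha>" using key by (intro mult_right_mono) auto
  finally have "t powr a * s powr b \<le> 2 powr c * s powr \<alpha> * R powr c" by (simp add: ac_simps)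
  then show ?thesis using Rpos unfolding c_def[symmetric] by (simp add: divide_le_eq)
qed

lemma kern_bound:
  assumes "z \<in> TB n" "w \<in> TB n" "u \<in> TB n" "e \<in> TB n"
  and c1: "0 \<le> fst a" "fst \<alpha> \<le> fst b" "fst c = fst a + fst b - fst \<alpha>"
  and c2: "0 \<le> snd a" "snd \<alpha> \<le> snd b" "snd c = snd a + snd b - snd \<alpha>"
  shows "rho n z powr fst a * rho n w powr snd a * (rho n u powr fst b * rho n e powr snd b /
       (cmod (rho2 n z u) powr fst c * cmod (rho2 n w e) powr snd c))
     \<le> (2 powr fst c * 2 powr snd c) * (rho n u powr fst \<alpha> * rho n e powr snd \<alpha>)"
proof -
  have r: "0 < rho n z" "0 < rho n w" "0 < rho n u" "0 < rho n e" using assms(1-4) by (auto simp: TB_def)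
  have b1: "rho n z powr fst a * rho n u powr fst b / cmod (rho2 n z u) powr fst c \<le> 2 powr fst c * rho n u powr fst \<alpha>"
    unfolding c1(3) by (rule suff_real) (use r c1 cmod_rho2_ge[of n z u] in auto)
  have b2: "rho n w powr snd a * rho n e powr snd b / cmod (rho2 n w e) powr snd c \<le> 2 powr snd c * rho n e powr snd \<alpha>"
    unfolding c2(3) by (rule suff_real) (use r c2 cmod_rho2_ge[of n w e] in auto)
  have "rho n z powr fst a * rho n w powr snd a * (rho n u powr fst b * rho n e powr snd b /
       (cmod (rho2 n z u) powr fst c * cmod (rho2 n w e) powr snd c)) =
     (rho n z powr fst a * rho n u powr fst b / cmod (rho2 n z u) powr fst c) *
     (rho n w powr snd a * rho n e powr snd b / cmod (rho2 n w e) powr snd c)" by simp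
  also have "\<dots> \<le> (2 powr fst c * rho n u powr fst \<alpha>) * (2 powr snd c * rho n e powr snd \<alpha>)"
    using b1 b2 by (intro mult_mono) auto
  finally show ?thesis by (simp add: ac_simps)
qed

lemma cpowr_meas: "f \<in> borel_measurable M \<Longrightarrow> (\<lambda>x. f x powr (c::complex)) \<in> borel_measurable M"
proof -
  assume f: "f \<in> borel_measurable M"
  have A: "f -` {0} \<inter> space M \<in> sets M" by (rule measurable_sets[OF f]) simp
  have "(\<lambda>x. if x \<in> f -` {0} then 0 else exp (c * ln (f x))) \<in> borel_measurable M"
    by (rule measurable_If_set[OF _ _ A]) (use f in measurable)
  then show ?thesis unfolding powr_def by simp
qed

lemma TB_sets: "0 < n \<Longrightarrow> TB n \<in> sets (CV n)"
proof -
  assume n: "0 < n"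
  have "rho n \<in> borel_measurable (CV n)" using rho_meas[OF n measurable_ident_sets[OF refl]] by simp
  then have "{x \<in> space (CV n). 0 < rho n x} \<in> sets (CV n)" by measurable
  then show ?thesis unfolding TB_def .
qed

lemma mix_eq:
  assumes n: "0 < n" and f: "f \<in> borel_measurable (CV n \<Otimes>\<^sub>M CV n)"
  shows "mixnorm11 n \<alpha> f = (\<integral>\<^sup>+ q. ennreal (indicator (TB n \<times> TB n) q * (cmod (f q) *
            (rho n (fst q) powr fst \<alpha> * rho n (snd q) powr snd \<alpha>))) \<partial>(CV n \<Otimes>\<^sub>M CV n))"
proof -
  define H where "H q = indicator (TB n \<times> TB n) q * (cmod (f q) * (rho n (fst q) powr fst \<alpha> * rho n (snd q) powr snd \<alpha>))" for q
  have TBs: "TB n \<in> sets (CV n)" by (rule TB_sets[OF n])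
  have fn: "(\<lambda>x. cmod (f x)) \<in> borel_measurable (CV n \<Otimes>\<^sub>M CV n)" using f by measurable
  have Hmeas: "H \<in> borel_measurable (CV n \<Otimes>\<^sub>M CV n)"
    unfolding H_def
    by (intro fn borel_measurable_times borel_measurable_indicator borel_measurable_norm f powr_real_measurable
        rho_meas[OF n] measurable_fst measurable_snd borel_measurable_const pair_measureI TBs)
  interpret P2: pair_sigma_finite "CV n" "CV n" by (rule psf_CV)
  have inner: "(\<integral>\<^sup>+ z. ennreal (indicator (TB n) z * cmod (f (z, w)) * rho n z powr fst \<alpha>) \<partial>CV n)
        * ennreal (indicator (TB n) w * rho n w powr snd \<alpha>) = (\<integral>\<^sup>+ z. ennreal (H (z, w)) \<partial>CV n)"
    if w: "w \<in> space (CV n)" for w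
  proof -
    have fm: "(\<lambda>z. f (z, w)) \<in> borel_measurable (CV n)" by (rule measurable_Pair1[OF f w])
    then have fm2: "(\<lambda>z. cmod (f (z, w))) \<in> borel_measurable (CV n)" by measurable
    have "(\<integral>\<^sup>+ z. ennreal (indicator (TB n) z * cmod (f (z, w)) * rho n z powr fst \<alpha>) \<partial>CV n)
          * ennreal (indicator (TB n) w * rho n w powr snd \<alpha>) =
        (\<integral>\<^sup>+ z. ennreal (indicator (TB n) z * cmod (f (z, w)) * rho n z powr fst \<alpha>) * ennreal (indicator (TB n) w * rho n w powr snd \<alpha>) \<partial>CV n)"
      by (rule nn_integral_multc[symmetric])
        (intro measurable_compose[OF _ measurable_ennreal] borel_measurable_times borel_measurable_indicator TBs
          fm2 powr_real_measurable rho_meas[OF n] measurable_ident_sets refl borel_measurable_const)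
    also have "\<dots> = (\<integral>\<^sup>+ z. ennreal (H (z, w)) \<partial>CV n)"
    proof (rule nn_integral_cong)
      fix z
      have "ennreal (indicator (TB n) z * cmod (f (z, w)) * rho n z powr fst \<alpha>) * ennreal (indicator (TB n) w * rho n w powr snd \<alpha>)
        = ennreal (indicator (TB n) z * cmod (f (z, w)) * rho n z powr fst \<alpha> * (indicator (TB n) w * rho n w powr snd \<alpha>))"
        by (rule ennreal_mult''[symmetric]) simp
      also have "indicator (TB n) z * cmod (f (z, w)) * rho n z powr fst \<alpha> * (indicator (TB n) w * rho n w powr snd \<alpha>) = H (z, w)"
        by (auto simp: H_def indicator_def)
      finally show "ennreal (indicator (TB n) z * cmod (f (z, w)) * rho n z powr fst \<alpha>) * ennreal (indicator (TB n) w * rho n w powr snd \<alpha>)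
        = ennreal (H (z, w))" .
    qed
    finally show ?thesis .
  qed
  have "mixnorm11 n \<alpha> f = (\<integral>\<^sup>+ w. (\<integral>\<^sup>+ z. ennreal (H (z, w)) \<partial>CV n) \<partial>CV n)"
    unfolding mixnorm11_def by (rule nn_integral_cong) (rule inner)
  also have "\<dots> = (\<integral>\<^sup>+ q. ennreal (H q) \<partial>(CV n \<Otimes>\<^sub>M CV n))"
    by (rule P2.nn_integral_snd) (rule measurable_compose[OF Hmeas measurable_ennreal])
  finally show ?thesis unfolding H_def .
qed

lemma kern_meas:
  assumes n: "0 < n" and z: "z \<in> space (CV n)" and w: "w \<in> space (CV n)"
  shows "(\<lambda>q. kernS n b c z w (fst q) (snd q)) \<in> borel_measurable (CV n \<Otimes>\<^sub>M CV n)"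
    "(\<lambda>q. kernT n b c z w (fst q) (snd q)) \<in> borel_measurable (CV n \<Otimes>\<^sub>M CV n)"
proof -
  have zc: "(\<lambda>q. z) \<in> measurable (CV n \<Otimes>\<^sub>M CV n) (CV n)" using z by simp
  have wc: "(\<lambda>q. w) \<in> measurable (CV n \<Otimes>\<^sub>M CV n) (CV n)" using w by simp
  have m1[measurable]: "(\<lambda>q. rho n (fst q)) \<in> borel_measurable (CV n \<Otimes>\<^sub>M CV n)"
    "(\<lambda>q. rho n (snd q)) \<in> borel_measurable (CV n \<Otimes>\<^sub>M CV n)"
    by (rule rho_meas[OF n]; simp)+
  have m2[measurable]: "(\<lambda>q. rho2 n z (fst q)) \<in> borel_measurable (CV n \<Otimes>\<^sub>M CV n)"
    "(\<lambda>q. rho2 n w (snd q)) \<in> borel_measurable (CV n \<Otimes>\<^sub>M CV n)"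
    by (rule rho2_meas[OF n zc]; simp) (rule rho2_meas[OF n wc]; simp)
  have m3[measurable]: "(\<lambda>q. rho2 n z (fst q) powr complex_of_real (fst c)) \<in> borel_measurable (CV n \<Otimes>\<^sub>M CV n)"
    "(\<lambda>q. rho2 n w (snd q) powr complex_of_real (snd c)) \<in> borel_measurable (CV n \<Otimes>\<^sub>M CV n)"
    by (rule cpowr_meas, rule m2)+
  show "(\<lambda>q. kernS n b c z w (fst q) (snd q)) \<in> borel_measurable (CV n \<Otimes>\<^sub>M CV n)"
    unfolding kernS_def by measurable
  show "(\<lambda>q. kernT n b c z w (fst q) (snd q)) \<in> borel_measurable (CV n \<Otimes>\<^sub>M CV n)"
    unfolding kernT_def by measurable
qed

lemma suff:
  fixes K :: "(nat \<Rightarrow> complex) \<Rightarrow> (nat \<Rightarrow> complex) \<Rightarrow> (nat \<Rightarrow> complex) \<Rightarrow> (nat \<Rightarrow> complex) \<Rightarrow> complex"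
  assumes n: "0 < n"
  and c1: "0 \<le> fst a" "fst \<alpha> \<le> fst b" "fst c = fst a + fst b - fst \<alpha>"
  and c2: "0 \<le> snd a" "snd \<alpha> \<le> snd b" "snd c = snd a + snd b - snd \<alpha>"
  and Kabs: "\<And>z w u e. cmod (K z w u e) = rho n u powr fst b * rho n e powr snd b /
       (cmod (rho2 n z u) powr fst c * cmod (rho2 n w e) powr snd c)"
  and Kmeas: "\<And>z w. z \<in> space (CV n) \<Longrightarrow> w \<in> space (CV n) \<Longrightarrow>
       (\<lambda>q. K z w (fst q) (snd q)) \<in> borel_measurable (CV n \<Otimes>\<^sub>M CV n)"
  shows "bounded_11_inf n \<alpha> a K"
  unfolding bounded_11_inf_def
proof (intro exI[of _ "2 powr fst c * 2 powr snd c"] ballI impI)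
  define C0 where "C0 = 2 powr fst c * 2 powr snd c"
  fix f assume f: "f \<in> borel_measurable (CV n \<Otimes>\<^sub>M CV n)" and fin: "mixnorm11 n \<alpha> f < \<infinity>"
  define H where "H q = indicator (TB n \<times> TB n) q * (cmod (f q) * (rho n (fst q) powr fst \<alpha> * rho n (snd q) powr snd \<alpha>))" for q
  have TBs: "TB n \<in> sets (CV n)" by (rule TB_sets[OF n])
  have fn: "(\<lambda>x. cmod (f x)) \<in> borel_measurable (CV n \<Otimes>\<^sub>M CV n)" using f by measurable
  have Hmeas: "H \<in> borel_measurable (CV n \<Otimes>\<^sub>M CV n)"
    unfolding H_def
    by (intro fn borel_measurable_times borel_measurable_indicator powr_real_measurable
        rho_meas[OF n] measurable_fst measurable_snd borel_measurable_const pair_measureI TBs)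
  have Hnn: "0 \<le> H q" for q unfolding H_def by simp
  have mixH: "mixnorm11 n \<alpha> f = (\<integral>\<^sup>+ q. ennreal (H q) \<partial>(CV n \<Otimes>\<^sub>M CV n))"
    unfolding H_def by (rule mix_eq[OF n f])
  have Hint: "integrable (CV n \<Otimes>\<^sub>M CV n) H"
    by (rule integrableI_nonneg[OF Hmeas]) (use fin Hnn mixH in auto)
  have Nval: "enn2real (mixnorm11 n \<alpha> f) = integral\<^sup>L (CV n \<Otimes>\<^sub>M CV n) H"
    unfolding mixH by (rule integral_eq_nn_integral[symmetric]) (use Hmeas Hnn in auto)
  have claim: "set_integrable (CV n \<Otimes>\<^sub>M CV n) (TB n \<times> TB n) (\<lambda>(u, \<eta>). K z w u \<eta> * f (u, \<eta>)) \<and>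
      cmod (int_op n a K f (z, w)) \<le> C0 * enn2real (mixnorm11 n \<alpha> f)" if zw: "z \<in> TB n" "w \<in> TB n" for z w
  proof -
    define Az where "Az = rho n z powr fst a * rho n w powr snd a"
    have Azpos: "0 < Az" unfolding Az_def using zw by (auto simp: TB_def)
    define M where "M = C0 / Az"
    have Mnn: "0 \<le> M" unfolding M_def C0_def using Azpos by simp
    define G where "G q = indicator (TB n \<times> TB n) q *\<^sub>R (K z w (fst q) (snd q) * f q)" for q
    have Geq: "(\<lambda>x. indicator (TB n \<times> TB n) x *\<^sub>R (case x of (u, \<eta>) \<Rightarrow> K z w u \<eta> * f (u, \<eta>))) = G"
      by (auto simp: G_def split: prod.splits)
    have Gmeas: "G \<in> borel_measurable (CV n \<Otimes>\<^sub>M CV n)"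
      unfolding G_def
      by (intro borel_measurable_scaleR borel_measurable_indicator pair_measureI TBs borel_measurable_times
          Kmeas f) (use zw in \<open>auto simp: TB_def\<close>)
    have Gb: "norm (G q) \<le> norm (M * H q)" for q
    proof (cases "q \<in> TB n \<times> TB n")
      case True
      then obtain u e where q: "q = (u, e)" "u \<in> TB n" "e \<in> TB n" by auto
      have "Az * cmod (K z w u e) \<le> C0 * (rho n u powr fst \<alpha> * rho n e powr snd \<alpha>)"
        unfolding Az_def C0_def Kabs by (rule kern_bound[OF zw q(2,3) c1 c2])
      then have kb: "cmod (K z w u e) \<le> M * (rho n u powr fst \<alpha> * rho n e powr snd \<alpha>)"
        unfolding M_def using Azpos by (simp add: field_simps)
      have "norm (G q) = cmod (K z w u e) * cmod (f q)" using True q by (simp add: G_def norm_mult)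
      also have "\<dots> \<le> M * (rho n u powr fst \<alpha> * rho n e powr snd \<alpha>) * cmod (f q)"
        by (rule mult_right_mono[OF kb]) simp
      also have "\<dots> = norm (M * H q)" using True q Mnn by (simp add: H_def abs_mult)
      finally show ?thesis .
    qed (simp add: G_def)
    have MHint: "integrable (CV n \<Otimes>\<^sub>M CV n) (\<lambda>q. M * H q)" using Hint by auto
    have Gint: "integrable (CV n \<Otimes>\<^sub>M CV n) G"
      by (rule Bochner_Integration.integrable_bound[OF MHint Gmeas]) (use Gb in auto)
    have si: "set_integrable (CV n \<Otimes>\<^sub>M CV n) (TB n \<times> TB n) (\<lambda>(u, \<eta>). K z w u \<eta> * f (u, \<eta>))"
      unfolding set_integrable_def Geq by (rule Gint)
    have opval: "int_op n a K f (z, w) = complex_of_real Az * integral\<^sup>L (CV n \<Otimes>\<^sub>M CV n) G"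
      unfolding int_op_def set_lebesgue_integral_def by (simp add: Geq Az_def)
    have "cmod (int_op n a K f (z, w)) = Az * cmod (integral\<^sup>L (CV n \<Otimes>\<^sub>M CV n) G)"
      unfolding opval using Azpos by (simp add: norm_mult)
    also have "\<dots> \<le> Az * integral\<^sup>L (CV n \<Otimes>\<^sub>M CV n) (\<lambda>q. norm (G q))"
      using Azpos by (intro mult_left_mono integral_norm_bound) auto
    also have "\<dots> \<le> Az * integral\<^sup>L (CV n \<Otimes>\<^sub>M CV n) (\<lambda>q. M * H q)"
    proof (intro mult_left_mono integral_mono)
      show "integrable (CV n \<Otimes>\<^sub>M CV n) (\<lambda>q. norm (G q))" using Gint by auto
      show "integrable (CV n \<Otimes>\<^sub>M CV n) (\<lambda>q. M * H q)" by (rule MHint)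
      fix q show "norm (G q) \<le> M * H q" using Gb[of q] Mnn Hnn[of q] by simp
    qed (use Azpos in auto)
    also have "\<dots> = C0 * integral\<^sup>L (CV n \<Otimes>\<^sub>M CV n) H"
      unfolding M_def using Azpos by simp
    finally show ?thesis using si Nval by simp
  qed
  show "(AE p in CV n \<Otimes>\<^sub>M CV n. p \<in> TB n \<times> TB n \<longrightarrow>
           set_integrable (CV n \<Otimes>\<^sub>M CV n) (TB n \<times> TB n) (\<lambda>(u, \<eta>). K (fst p) (snd p) u \<eta> * f (u, \<eta>))) \<and>
        (AE p in CV n \<Otimes>\<^sub>M CV n. p \<in> TB n \<times> TB n \<longrightarrow>
           cmod (int_op n a K f p) \<le> 2 powr fst c * 2 powr snd c * enn2real (mixnorm11 n \<alpha> f))"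
    using claim unfolding C0_def by (auto intro!: AE_I2)
qed

lemma nec_conds:
  assumes n: "0 < n"
  and PB: "\<And>z w u e. z \<in> TB n \<Longrightarrow> w \<in> TB n \<Longrightarrow> u \<in> TB n \<Longrightarrow> e \<in> TB n \<Longrightarrow>
     rho n z powr fst a * rho n w powr snd a * (rho n u powr fst b * rho n e powr snd b /
       (cmod (rho2 n z u) powr fst c * cmod (rho2 n w e) powr snd c))
     \<le> C * (rho n u powr fst \<alpha> * rho n e powr snd \<alpha>)"
  shows "(0 \<le> fst a \<and> fst b \<ge> fst \<alpha> \<and> fst c = fst a + fst b - fst \<alpha>) \<and>
         (0 \<le> snd a \<and> snd b \<ge> snd \<alpha> \<and> snd c = snd a + snd b - snd \<alpha>)"
proof -
  have r2: "cmod (rho2 n (pt n t) (pt n s)) = (t + s) / 2" if "0 < t" "0 < s" for t s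
    using that by (simp only: rho2_pt[OF n] norm_of_real) simp
  have H1: "t powr fst a * s powr (fst b - fst \<alpha>) \<le> C * ((t + s) / 2) powr fst c" if ts: "0 < t" "0 < s" for t s
  proof -
    have "t powr fst a * (s powr fst b / ((t + s) / 2) powr fst c) \<le> C * s powr fst \<alpha>"
      using PB[OF pt_TB[OF n ts(1)] pt_TB[OF n, of 1] pt_TB[OF n ts(2)] pt_TB[OF n, of 1]]
      by (simp add: rho_pt[OF n] r2 ts)
    moreover have Rp: "0 < ((t + s) / 2) powr fst c" using ts by simp
    ultimately have "(t powr fst a * s powr fst b) / ((t + s) / 2) powr fst c \<le> C * s powr fst \<alpha>" by simp
    then have "t powr fst a * s powr fst b \<le> C * s powr fst \<alpha> * ((t + s) / 2) powr fst c"
      using Rp by (simp add: pos_divide_le_eq)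
    moreover have "s powr fst b = s powr (fst b - fst \<alpha>) * s powr fst \<alpha>" by (simp add: powr_add[symmetric])
    ultimately have "(t powr fst a * s powr (fst b - fst \<alpha>)) * s powr fst \<alpha> \<le> (C * ((t + s) / 2) powr fst c) * s powr fst \<alpha>"
      by (simp add: ac_simps)
    then show ?thesis using ts by simp
  qed
  have H2: "t powr snd a * s powr (snd b - snd \<alpha>) \<le> C * ((t + s) / 2) powr snd c" if ts: "0 < t" "0 < s" for t s
  proof -
    have "t powr snd a * (s powr snd b / ((t + s) / 2) powr snd c) \<le> C * s powr snd \<alpha>"
      using PB[OF pt_TB[OF n, of 1] pt_TB[OF n ts(1)] pt_TB[OF n, of 1] pt_TB[OF n ts(2)]]
      by (simp add: rho_pt[OF n] r2 ts)
    moreover have Rp: "0 < ((t + s) / 2) powr snd c" using ts by simp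
    ultimately have "(t powr snd a * s powr snd b) / ((t + s) / 2) powr snd c \<le> C * s powr snd \<alpha>" by simp
    then have "t powr snd a * s powr snd b \<le> C * s powr snd \<alpha> * ((t + s) / 2) powr snd c"
      using Rp by (simp add: pos_divide_le_eq)
    moreover have "s powr snd b = s powr (snd b - snd \<alpha>) * s powr snd \<alpha>" by (simp add: powr_add[symmetric])
    ultimately have "(t powr snd a * s powr (snd b - snd \<alpha>)) * s powr snd \<alpha> \<le> (C * ((t + s) / 2) powr snd c) * s powr snd \<alpha>"
      by (simp add: ac_simps)
    then show ?thesis using ts by simp
  qed
  from cond_from_bound[OF H1] cond_from_bound[OF H2] show ?thesis by auto
qed

lemma equiv_K:
  fixes K :: "(nat \<Rightarrow> complex) \<Rightarrow> (nat \<Rightarrow> complex) \<Rightarrow> (nat \<Rightarrow> complex) \<Rightarrow> (nat \<Rightarrow> complex) \<Rightarrow> complex"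
  assumes n: "0 < n"
  and Kabs: "\<And>z w u e. cmod (K z w u e) = rho n u powr fst b * rho n e powr snd b /
       (cmod (rho2 n z u) powr fst c * cmod (rho2 n w e) powr snd c)"
  and Kmeas: "\<And>z w. z \<in> space (CV n) \<Longrightarrow> w \<in> space (CV n) \<Longrightarrow>
       (\<lambda>q. K z w (fst q) (snd q)) \<in> borel_measurable (CV n \<Otimes>\<^sub>M CV n)"
  and cont: "\<And>z w u e. z \<in> TB n \<Longrightarrow> w \<in> TB n \<Longrightarrow> u \<in> TB n \<Longrightarrow> e \<in> TB n \<Longrightarrow>
     isCont (\<lambda>x. K (fst (fst x)) (snd (fst x)) (fst (snd x)) (snd (snd x))) ((z, w), (u, e))"
  shows "bounded_11_inf n \<alpha> a K \<longleftrightarrow>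
            (0 \<le> fst a \<and> fst b \<ge> fst \<alpha> \<and> fst c = fst a + fst b - fst \<alpha>) \<and>
            (0 \<le> snd a \<and> snd b \<ge> snd \<alpha> \<and> snd c = snd a + snd b - snd \<alpha>)"
proof
  assume "bounded_11_inf n \<alpha> a K"
  then obtain C where bd: "\<forall>f \<in> borel_measurable (CV n \<Otimes>\<^sub>M CV n). mixnorm11 n \<alpha> f < \<infinity> \<longrightarrow>
        (AE p in CV n \<Otimes>\<^sub>M CV n. p \<in> TB n \<times> TB n \<longrightarrow>
           set_integrable (CV n \<Otimes>\<^sub>M CV n) (TB n \<times> TB n)
             (\<lambda>(u, \<eta>). K (fst p) (snd p) u \<eta> * f (u, \<eta>))) \<and>
        (AE p in CV n \<Otimes>\<^sub>M CV n. p \<in> TB n \<times> TB n \<longrightarrow>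
           cmod (int_op n a K f p) \<le> C * enn2real (mixnorm11 n \<alpha> f))"
    unfolding bounded_11_inf_def by blast
  show "(0 \<le> fst a \<and> fst b \<ge> fst \<alpha> \<and> fst c = fst a + fst b - fst \<alpha>) \<and>
            (0 \<le> snd a \<and> snd b \<ge> snd \<alpha> \<and> snd c = snd a + snd b - snd \<alpha>)"
  proof (rule nec_conds[OF n])
    fix z w u e assume pts: "z \<in> TB n" "w \<in> TB n" "u \<in> TB n" "e \<in> TB n"
    show "rho n z powr fst a * rho n w powr snd a * (rho n u powr fst b * rho n e powr snd b /
       (cmod (rho2 n z u) powr fst c * cmod (rho2 n w e) powr snd c))
     \<le> C * (rho n u powr fst \<alpha> * rho n e powr snd \<alpha>)"
      using nec_pointwise[OF n bd cont pts] unfolding Kabs .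
  qed
next
  assume "(0 \<le> fst a \<and> fst b \<ge> fst \<alpha> \<and> fst c = fst a + fst b - fst \<alpha>) \<and>
            (0 \<le> snd a \<and> snd b \<ge> snd \<alpha> \<and> snd c = snd a + snd b - snd \<alpha>)"
  then show "bounded_11_inf n \<alpha> a K"
    by (intro suff[OF n _ _ _ _ _ _ Kabs Kmeas]) auto
qed

theorem theorem6p6:
  fixes n :: nat and a b c \<alpha> :: "real \<times> real"
  assumes "0 < n" and "fst \<alpha> > -1" and "snd \<alpha> > -1"
  shows "(bounded_11_inf n \<alpha> a (kernS n b c) \<longleftrightarrow>
            (0 \<le> fst a \<and> fst b \<ge> fst \<alpha> \<and> fst c = fst a + fst b - fst \<alpha>) \<and>
            (0 \<le> snd a \<and> snd b \<ge> snd \<alpha> \<and> snd c = snd a + snd b - snd \<alpha>))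
       \<and> (bounded_11_inf n \<alpha> a (kernT n b c) \<longleftrightarrow>
            (0 \<le> fst a \<and> fst b \<ge> fst \<alpha> \<and> fst c = fst a + fst b - fst \<alpha>) \<and>
            (0 \<le> snd a \<and> snd b \<ge> snd \<alpha> \<and> snd c = snd a + snd b - snd \<alpha>))"
proof
  show "bounded_11_inf n \<alpha> a (kernS n b c) \<longleftrightarrow>
            (0 \<le> fst a \<and> fst b \<ge> fst \<alpha> \<and> fst c = fst a + fst b - fst \<alpha>) \<and>
            (0 \<le> snd a \<and> snd b \<ge> snd \<alpha> \<and> snd c = snd a + snd b - snd \<alpha>)"
    by (rule equiv_K[OF assms(1) cmod_kernS kern_meas(1)[OF assms(1)] kernS_cont])
  show "bounded_11_inf n \<alpha> a (kernT n b c) \<longleftrightarrow>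
            (0 \<le> fst a \<and> fst b \<ge> fst \<alpha> \<and> fst c = fst a + fst b - fst \<alpha>) \<and>
            (0 \<le> snd a \<and> snd b \<ge> snd \<alpha> \<and> snd c = snd a + snd b - snd \<alpha>)"
    by (rule equiv_K[OF assms(1) cmod_kernT kern_meas(2)[OF assms(1)] kernT_cont])
qed

end
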